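(* Let $\mathcal{D}$ be a dataset of $N$ points, $\mathcal{A}$ a learning algorithm producing classifiers, and $[a,b]\subset(0,1)$. For $S\subseteq\mathcal{D}$ let $T(S)$ and $F(S)$ be the true positive rate and false positive rate (on a fixed test set) of the classifier $\mathcal{A}(S)$, and for $p_t\in[a,b]$ let $U_{p_t}(S)=\mathrm{NB}(p_t;S)=T(S)-\frac{p_t}{1-p_t}F(S)$. Let $\mathcal{U}_{\mathrm{cost}}(a,b)=\{U_{p_t}: p_t\in[a,b]\}$. Then $\mathcal{U}_{\mathrm{cost}}(a,b)$ is $(\epsilon,\delta)$-gameable under the aggregate-value favorability $F_{\mathrm{agg}}(\psi(U);P)$, for any $P\subseteq\mathcal{D}$.
   Context: Fix non-negative weights $w_0,\dots,w_{N-1}$ with $\sum_{S\subseteq\mathcal{D}\setminus\{i\}}w_{|S|}=1$; the semivalue of $i$ under utility $U:2^{\mathcal{D}}\to\mathbb{R}$ is $\psi_i(U)=\sum_{S\subseteq\mathcal{D}\setminus\{i\}}w_{|S|}[U(S\cup\{i\})-U(S)]$, and $F_{\mathrm{agg}}(\psi(U);P)=\sum_{i\in P}\psi_i(U)$. A class $\mathcal{U}$ is $(\epsilon,\delta)$-gameable under favorability $F$ if there exists an algorithm that, for any $P\subseteq\mathcal{D}$, returns $U\in\mathcal{U}$ such that with probability at least $1-\delta$, $|F(\psi(U),P)-\sup_{U'\in\mathcal{U}}F(\psi(U'),P)|<\epsilon$, using at most $O(\mathrm{poly}(N)\log(1/\delta)/\epsilon^2)$ utility function evaluations. *)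

theory Defs
  imports "HOL-Probability.Probability"
begin

text \<open>Dataset D = {..<N} (indices of the N points). Semivalue with weights w.\<close>

definition semivalue :: "(nat \<Rightarrow> real) \<Rightarrow> nat set \<Rightarrow> (nat set \<Rightarrow> real) \<Rightarrow> nat \<Rightarrow> real" where
  "semivalue w D U i = (\<Sum>S\<in>Pow (D - {i}). w (card S) * (U (insert i S) - U S))"

definition F_agg :: "(nat \<Rightarrow> real) \<Rightarrow> nat set \<Rightarrow> real" where
  "F_agg \<psi> P = (\<Sum>i\<in>P. \<psi> i)"

definition semivalue_weights :: "nat \<Rightarrow> (nat \<Rightarrow> real) \<Rightarrow> bool" where
  "semivalue_weights N w \<longleftrightarrow> (\<forall>k. 0 \<le> w k) \<and>
     (\<forall>i\<in>{..<N}. (\<Sum>S\<in>Pow ({..<N} - {i}). w (card S)) = 1)"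

definition tpr :: "('x \<times> bool) list \<Rightarrow> ('x \<Rightarrow> bool) \<Rightarrow> real" where
  "tpr test h = real (card {j. j < length test \<and> snd (test ! j) \<and> h (fst (test ! j))})
              / real (card {j. j < length test \<and> snd (test ! j)})"

definition fpr :: "('x \<times> bool) list \<Rightarrow> ('x \<Rightarrow> bool) \<Rightarrow> real" where
  "fpr test h = real (card {j. j < length test \<and> \<not> snd (test ! j) \<and> h (fst (test ! j))})
              / real (card {j. j < length test \<and> \<not> snd (test ! j)})"

definition net_benefit :: "('x \<times> bool) list \<Rightarrow> (nat set \<Rightarrow> 'x \<Rightarrow> bool) \<Rightarrow> real \<Rightarrow> nat set \<Rightarrow> real" where
  "net_benefit test A pt S = tpr test (A S) - pt / (1 - pt) * fpr test (A S)"

definition U_cost :: "('x \<times> bool) list \<Rightarrow> (nat set \<Rightarrow> 'x \<Rightarrow> bool) \<Rightarrow> real \<Rightarrow> real \<Rightarrow> (nat set \<Rightarrow> real) set" where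
  "U_cost test A a b = {net_benefit test A pt | pt. pt \<in> {a..b}}"

section \<open>Query algorithms (randomness = a distribution over query trees)\<close>

datatype ('q, 'a, 'r) qtree = Ret 'r | Ask 'q "'a \<Rightarrow> ('q, 'a, 'r) qtree"

primrec run :: "('q \<Rightarrow> 'a) \<Rightarrow> ('q, 'a, 'r) qtree \<Rightarrow> 'r \<times> nat" where
  "run orc (Ret r) = (r, 0)"
| "run orc (Ask q k) = (let rn = (run orc \<circ> k) (orc q) in (fst rn, Suc (snd rn)))"

definition nb_oracle :: "real \<Rightarrow> real \<Rightarrow> nat \<Rightarrow> ('x \<times> bool) list \<Rightarrow> (nat set \<Rightarrow> 'x \<Rightarrow> bool)
    \<Rightarrow> real \<times> nat set \<Rightarrow> real" where
  "nb_oracle a b N test A q =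
     (if fst q \<in> {a..b} \<and> snd q \<subseteq> {..<N} then net_benefit test A (fst q) (snd q) else 0)"

end

theory Submission
  imports Defs
begin


definition rr :: "real \<Rightarrow> real" where "rr p = p / (1 - p)"

lemma rr_mono: assumes "p \<le> q" "q < 1" shows "rr p \<le> rr q"
proof -
  have e: "rr x = 1 / (1 - x) - 1" if "x < 1" for x
    using that unfolding rr_def by (simp add: field_simps)
  have "1 / (1 - p) \<le> 1 / (1 - q)" using assms by (intro divide_left_mono) auto
  thus ?thesis using assms by (simp add: e)
qed

lemma semivalue_lin:
  "F_agg (semivalue w D (net_benefit test A p)) P =
   F_agg (semivalue w D (\<lambda>S. tpr test (A S))) P - rr p * F_agg (semivalue w D (\<lambda>S. fpr test (A S))) P"
proof -
  have "semivalue w D (net_benefit test A p) i =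
    semivalue w D (\<lambda>S. tpr test (A S)) i - rr p * semivalue w D (\<lambda>S. fpr test (A S)) i" for i
    unfolding semivalue_def sum_distrib_left sum_subtractf[symmetric]
    by (rule sum.cong) (simp_all add: net_benefit_def rr_def algebra_simps)
  thus ?thesis unfolding F_agg_def sum_distrib_left sum_subtractf[symmetric] by simp
qed

lemma fpr_bounds: "0 \<le> fpr test h \<and> fpr test h \<le> 1"
proof -
  have "card {j. j < length test \<and> \<not> snd (test ! j) \<and> h (fst (test ! j))}
        \<le> card {j. j < length test \<and> \<not> snd (test ! j)}"
    by (rule card_mono) auto
  moreover have "real n / real d \<le> 1" if "n \<le> d" for n d :: nat
    using that by (cases "d = 0") (simp_all add: divide_le_eq_1)
  ultimately show ?thesis unfolding fpr_def by simp
qed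

lemma semivalue_bound:
  assumes w: "semivalue_weights N w" and i: "i < N"
    and U: "\<And>S. \<bar>(U :: nat set \<Rightarrow> real) (insert i S) - U S\<bar> \<le> 1"
  shows "\<bar>semivalue w {..<N} U i\<bar> \<le> 1"
proof -
  have "\<bar>semivalue w {..<N} U i\<bar> \<le> (\<Sum>S\<in>Pow ({..<N} - {i}). \<bar>w (card S) * (U (insert i S) - U S)\<bar>)"
    unfolding semivalue_def by (rule sum_abs)
  also have "\<dots> \<le> (\<Sum>S\<in>Pow ({..<N} - {i}). w (card S))"
  proof (rule sum_mono)
    fix S :: "nat set"
    have "0 \<le> w (card S)" using w unfolding semivalue_weights_def by auto
    thus "\<bar>w (card S) * (U (insert i S) - U S)\<bar> \<le> w (card S)"
      using U[of S] by (simp add: abs_mult mult_left_le)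
  qed
  also have "\<dots> = 1" using w i unfolding semivalue_weights_def by auto
  finally show ?thesis .
qed

lemma beta_bound:
  assumes w: "semivalue_weights N w" and P: "P \<subseteq> {..<N}"
  shows "\<bar>F_agg (semivalue w {..<N} (\<lambda>S. fpr test (A S))) P\<bar> \<le> real (card P)"
proof -
  have "\<bar>F_agg (semivalue w {..<N} (\<lambda>S. fpr test (A S))) P\<bar>
     \<le> (\<Sum>i\<in>P. \<bar>semivalue w {..<N} (\<lambda>S. fpr test (A S)) i\<bar>)"
    unfolding F_agg_def by (rule sum_abs)
  also have "\<dots> \<le> (\<Sum>i\<in>P. 1)"
  proof (rule sum_mono)
    fix i assume "i \<in> P"
    with P have "i < N" by auto
    show "\<bar>semivalue w {..<N} (\<lambda>S. fpr test (A S)) i\<bar> \<le> 1"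
      by (rule semivalue_bound[OF w \<open>i < N\<close>])
         (use fpr_bounds in \<open>smt (verit)\<close>)
  qed
  finally show ?thesis by simp
qed

lemma sup_eq:
  assumes "a \<le> b" "b < 1"
  shows "(SUP U\<in>U_cost test A a b. F_agg (semivalue w D U) P) = F_agg (semivalue w D (net_benefit test A
      (if F_agg (semivalue w D (\<lambda>S. fpr test (A S))) P \<ge> 0 then a else b))) P"
proof -
  define g where "g = (\<lambda>U. F_agg (semivalue w D U) P)"
  define \<beta> where "\<beta> = F_agg (semivalue w D (\<lambda>S. fpr test (A S))) P"
  define \<alpha> where "\<alpha> = F_agg (semivalue w D (\<lambda>S. tpr test (A S))) P"
  have gl: "g (net_benefit test A p) = \<alpha> - rr p * \<beta>" for p
    unfolding g_def \<alpha>_def \<beta>_def by (rule semivalue_lin)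
  have eq: "g ` U_cost test A a b = (\<lambda>p. \<alpha> - rr p * \<beta>) ` {a..b}"
    unfolding U_cost_def by (force simp: gl)
  have "Sup ((\<lambda>p. \<alpha> - rr p * \<beta>) ` {a..b}) = \<alpha> - rr (if 0 \<le> \<beta> then a else b) * \<beta>"
  proof (rule cSup_eq_maximum)
    show "\<alpha> - rr (if 0 \<le> \<beta> then a else b) * \<beta> \<in> (\<lambda>p. \<alpha> - rr p * \<beta>) ` {a..b}"
      using assms by auto
    show "x \<le> \<alpha> - rr (if 0 \<le> \<beta> then a else b) * \<beta>" if xin: "x \<in> (\<lambda>p. \<alpha> - rr p * \<beta>) ` {a..b}" for x
    proof -
      obtain p where p: "p \<in> {a..b}" "x = \<alpha> - rr p * \<beta>" using xin by auto
      have "rr a \<le> rr p" "rr p \<le> rr b" using p assms by (auto intro: rr_mono)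
      thus ?thesis
        using p by (auto intro: mult_right_mono mult_right_mono_neg)
    qed
  qed
  thus ?thesis using eq gl unfolding g_def \<beta>_def by simp
qed



lemma hoeff:
  fixes q :: "'a pmf" and g :: "'a \<Rightarrow> real"
  assumes g: "\<And>x. \<bar>g x\<bar> \<le> 1" and m: "m > 0" and t: "t \<ge> 0"
  shows "measure_pmf.prob (Pi_pmf {..<m} d (\<lambda>_. q))
           {x. \<bar>(\<Sum>j<m. g (x j)) - real m * measure_pmf.expectation q g\<bar> \<ge> t}
         \<le> 2 * exp (-2 * t\<^sup>2 / (real m * 4))"
proof -
  define M where "M = Pi_pmf {..<m} d (\<lambda>_. q)"
  have comp: "map_pmf (\<lambda>f. f j) M = q" if "j < m" for j
    unfolding M_def using that by (subst Pi_pmf_component) auto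
  interpret H: Hoeffding_ineq_iid M "{..<m}" "\<lambda>j x. g (x j)" "\<lambda>x. g (x 0)" "-1" 1
    "measure_pmf.expectation q g"
  proof unfold_locales
    show "prob_space.indep_vars (measure_pmf M) (\<lambda>_. borel) (\<lambda>j x. g (x j)) {..<m}"
      unfolding M_def
      by (intro prob_space.indep_vars_compose2[OF _ indep_vars_Pi_pmf])
         (auto simp: measure_pmf.prob_space_axioms)
  next
    fix j assume "j \<in> {..<m}"
    hence "j < m" by simp
    have "distr (measure_pmf M) borel (\<lambda>x. g (x j)) = distr (measure_pmf (map_pmf (\<lambda>f. f j) M)) borel g"
      unfolding map_pmf_rep_eq by (subst distr_distr) (auto simp: o_def)
    also have "\<dots> = distr (measure_pmf (map_pmf (\<lambda>f. f 0) M)) borel g"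
      using comp[OF \<open>j < m\<close>] comp[OF m] by simp
    also have "\<dots> = distr (measure_pmf M) borel (\<lambda>x. g (x 0))"
      unfolding map_pmf_rep_eq by (subst distr_distr) (auto simp: o_def)
    finally show "distr (measure_pmf M) borel (\<lambda>x. g (x j)) = distr (measure_pmf M) borel (\<lambda>x. g (x 0))" .
  next
    show "AE x in measure_pmf M. g (x 0) \<in> {- 1..1}"
      using g by (auto simp: abs_le_iff)
  next
    have "measure_pmf.expectation M (\<lambda>x. g (x 0)) = measure_pmf.expectation (map_pmf (\<lambda>f. f 0) M) g"
      by simp
    also have "\<dots> = measure_pmf.expectation q g" using comp[OF m] by simp
    finally show "measure_pmf.expectation q g \<equiv> measure_pmf.expectation M (\<lambda>x. g (x 0))" by simp
  qed simp_all
  have "measure_pmf.prob M {x \<in> space (measure_pmf M). \<bar>(\<Sum>j<m. g (x j)) - real (card {..<m}) * measure_pmf.expectation q g\<bar> \<ge> t}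
     \<le> 2 * exp (-2 * t\<^sup>2 / (real (card {..<m}) * (1 - (-1))\<^sup>2))"
    by (rule H.Hoeffding_ineq_abs_ge) (use t m in auto)
  thus ?thesis unfolding M_def by (simp add: power2_eq_square)
qed



definition fpd :: "('x \<times> bool) list \<Rightarrow> (nat set \<Rightarrow> 'x \<Rightarrow> bool) \<Rightarrow> nat \<times> nat set \<Rightarrow> real" where
  "fpd test A z = fpr test (A (insert (fst z) (snd z))) - fpr test (A (snd z))"

lemma fpd_bound: "\<bar>fpd test A z\<bar> \<le> 1"
  unfolding fpd_def using fpr_bounds[of test "A (insert (fst z) (snd z))"] fpr_bounds[of test "A (snd z)"]
  by linarith

fun mk :: "real \<Rightarrow> real \<Rightarrow> (nat \<Rightarrow> nat \<times> nat set) \<Rightarrow> nat \<Rightarrow> real \<Rightarrow> (real \<times> nat set, real, real) qtree" where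
  "mk a b x 0 acc = Ret (if 0 \<le> acc then a else b)"
| "mk a b x (Suc n) acc = Ask (a, insert (fst (x n)) (snd (x n))) (\<lambda>v1. Ask (b, insert (fst (x n)) (snd (x n)))
     (\<lambda>v2. Ask (a, snd (x n)) (\<lambda>v3. Ask (b, snd (x n)) (\<lambda>v4. mk a b x n (acc + ((v1 - v2) - (v3 - v4)))))))"

lemma run_mk:
  assumes "a \<le> b" and "\<forall>j<n. fst (x j) < N \<and> snd (x j) \<subseteq> {..<N}"
  shows "run (nb_oracle a b N test A) (mk a b x n acc) =
    (if 0 \<le> acc + (rr b - rr a) * (\<Sum>j<n. fpd test A (x j)) then a else b, 4 * n)"
  using assms(2)
proof (induction n arbitrary: acc)
  case 0
  then show ?case by simp
next
  case (Suc n)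
  have IH: "run (nb_oracle a b N test A) (mk a b x n acc') =
    (if 0 \<le> acc' + (rr b - rr a) * (\<Sum>j<n. fpd test A (x j)) then a else b, 4 * n)" for acc'
    using Suc by auto
  have x: "fst (x n) < N" "snd (x n) \<subseteq> {..<N}" using Suc.prems by auto
  have e: "nb_oracle a b N test A (a, insert (fst (x n)) (snd (x n))) - nb_oracle a b N test A (b, insert (fst (x n)) (snd (x n)))
    - (nb_oracle a b N test A (a, snd (x n)) - nb_oracle a b N test A (b, snd (x n)))
    = (rr b - rr a) * fpd test A (x n)"
    using x assms(1) by (simp add: nb_oracle_def net_benefit_def fpd_def rr_def algebra_simps)
  define R where "R = run (nb_oracle a b N test A) (mk a b x n (acc + (rr b - rr a) * fpd test A (x n)))"
  have r: "run (nb_oracle a b N test A) (mk a b x (Suc n) acc) = (fst R, Suc (Suc (Suc (Suc (snd R)))))"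
    unfolding R_def by (simp add: Let_def e)
  have c: "(acc + (rr b - rr a) * fpd test A (x n)) + (rr b - rr a) * (\<Sum>j<n. fpd test A (x j))
     = acc + (rr b - rr a) * (\<Sum>j<Suc n. fpd test A (x j))"
    by (simp add: distrib_left)
  show ?case unfolding r R_def IH c by simp
qed



definition qf :: "(nat \<Rightarrow> real) \<Rightarrow> nat \<Rightarrow> nat set \<Rightarrow> nat \<times> nat set \<Rightarrow> real" where
  "qf w N P z = (if fst z \<in> P \<and> snd z \<subseteq> {..<N} - {fst z} then w (card (snd z)) / real (card P) else 0)"

definition qd :: "(nat \<Rightarrow> real) \<Rightarrow> nat \<Rightarrow> nat set \<Rightarrow> (nat \<times> nat set) pmf" where
  "qd w N P = embed_pmf (qf w N P)"

context
  fixes w N P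
  assumes sw: "semivalue_weights N w" and PN: "P \<subseteq> {..<N}" and Pne: "P \<noteq> {}"
begin

definition "QQ = Sigma P (\<lambda>i. Pow ({..<N} - {i}))"

lemma finQ: "finite QQ"
  unfolding QQ_def using PN finite_subset by (intro finite_SigmaI) auto

lemma finP: "finite P" using PN finite_subset by auto

lemma qf_nonneg: "0 \<le> qf w N P z"
  using sw unfolding qf_def semivalue_weights_def by auto

lemma qf_out: "z \<notin> QQ \<Longrightarrow> qf w N P z = 0"
  unfolding qf_def QQ_def by (cases z) auto

lemma qf_sum: "(\<Sum>z\<in>QQ. qf w N P z) = 1"
proof -
  have "(\<Sum>z\<in>QQ. qf w N P z) = (\<Sum>i\<in>P. \<Sum>S\<in>Pow ({..<N} - {i}). qf w N P (i, S))"
    unfolding QQ_def using finQ[unfolded QQ_def] finP by (subst sum.Sigma) auto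
  also have "\<dots> = (\<Sum>i\<in>P. (\<Sum>S\<in>Pow ({..<N} - {i}). w (card S)) / real (card P))"
    by (intro sum.cong refl) (auto simp: qf_def sum_divide_distrib)
  also have "\<dots> = (\<Sum>i\<in>P. 1 / real (card P))"
    using sw PN unfolding semivalue_weights_def by (intro sum.cong refl) auto
  also have "\<dots> = 1" using finP Pne by simp
  finally show ?thesis .
qed

lemma qf_prob: "(\<integral>\<^sup>+z. ennreal (qf w N P z) \<partial>count_space UNIV) = 1"
proof -
  have "(\<integral>\<^sup>+z. ennreal (qf w N P z) \<partial>count_space UNIV) = (\<Sum>z\<in>QQ. ennreal (qf w N P z))"
    by (rule nn_integral_count_space') (auto simp: finQ qf_out)
  also have "\<dots> = ennreal (\<Sum>z\<in>QQ. qf w N P z)"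
    by (rule sum_ennreal) (simp add: qf_nonneg)
  finally show ?thesis by (simp add: qf_sum)
qed

lemma pmf_qd: "pmf (qd w N P) z = qf w N P z"
  unfolding qd_def by (rule pmf_embed_pmf) (auto simp: qf_nonneg qf_prob)

lemma set_qd: "z \<in> set_pmf (qd w N P) \<Longrightarrow> fst z < N \<and> snd z \<subseteq> {..<N}"
  using PN unfolding set_pmf_eq pmf_qd qf_def by (auto split: if_splits)

lemma exp_qd: "measure_pmf.expectation (qd w N P) (fpd test A)
   = F_agg (semivalue w {..<N} (\<lambda>S. fpr test (A S))) P / real (card P)"
proof -
  have "measure_pmf.expectation (qd w N P) (fpd test A) = (\<Sum>z\<in>QQ. fpd test A z * pmf (qd w N P) z)"
    by (rule integral_measure_pmf_real) (use qf_out in \<open>auto simp: finQ pmf_qd set_pmf_eq\<close>)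
  also have "\<dots> = (\<Sum>i\<in>P. \<Sum>S\<in>Pow ({..<N} - {i}). fpd test A (i, S) * qf w N P (i, S))"
    unfolding QQ_def pmf_qd using finQ[unfolded QQ_def] finP by (subst sum.Sigma) auto
  also have "\<dots> = (\<Sum>i\<in>P. semivalue w {..<N} (\<lambda>S. fpr test (A S)) i / real (card P))"
    unfolding semivalue_def sum_divide_distrib
    by (intro sum.cong refl) (auto simp: qf_def fpd_def)
  also have "\<dots> = F_agg (semivalue w {..<N} (\<lambda>S. fpr test (A S))) P / real (card P)"
    unfolding F_agg_def sum_divide_distrib ..
  finally show ?thesis .
qed

end



lemma err_bound:
  assumes "a \<le> b" "b < 1" "c0 \<in> {a, b}"
  shows "\<bar>F_agg (semivalue w D (net_benefit test A c0)) P
          - F_agg (semivalue w D (net_benefit test A (if F_agg (semivalue w D (\<lambda>S. fpr test (A S))) P \<ge> 0 then a else b))) P\<bar>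
         \<le> (rr b - rr a) * \<bar>F_agg (semivalue w D (\<lambda>S. fpr test (A S))) P\<bar>"
proof -
  define \<beta> where "\<beta> = F_agg (semivalue w D (\<lambda>S. fpr test (A S))) P"
  have ab: "rr a \<le> rr b" using assms by (intro rr_mono) auto
  have "\<bar>(rr (if \<beta> \<ge> 0 then a else b) - rr c0) * \<beta>\<bar> \<le> (rr b - rr a) * \<bar>\<beta>\<bar>"
    using assms ab by (auto simp: abs_mult)
  thus ?thesis unfolding semivalue_lin \<beta>_def[symmetric] by (simp add: algebra_simps)
qed



theorem proposition3:
  fixes a b :: real and W :: "nat \<Rightarrow> nat \<Rightarrow> real"
  assumes "0 < a" and "a \<le> b" and "b < 1"
    and "\<And>N. semivalue_weights N (W N)"
  shows "\<exists>(Alg :: nat \<Rightarrow> nat set \<Rightarrow> real \<Rightarrow> real \<Rightarrow> (real \<times> nat set, real, real) qtree pmf)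
            (C :: real) (k :: nat).
     \<forall>N P \<epsilon> \<delta> (test :: ('x \<times> bool) list) (A :: nat set \<Rightarrow> 'x \<Rightarrow> bool).
       P \<subseteq> {..<N} \<longrightarrow> 0 < \<epsilon> \<longrightarrow> 0 < \<delta> \<longrightarrow> \<delta> < 1 \<longrightarrow>
       (\<forall>t\<in>set_pmf (Alg N P \<epsilon> \<delta>).
          fst (run (nb_oracle a b N test A) t) \<in> {a..b} \<and>
          real (snd (run (nb_oracle a b N test A) t)) \<le> C * real N ^ k * ln (1 / \<delta>) / \<epsilon>\<^sup>2)
       \<and> measure_pmf.prob (Alg N P \<epsilon> \<delta>)
           {t. \<bar>F_agg (semivalue (W N) {..<N}
                   (net_benefit test A (fst (run (nb_oracle a b N test A) t)))) P
                - (SUP U\<in>U_cost test A a b. F_agg (semivalue (W N) {..<N} U) P)\<bar> < \<epsilon>}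
         \<ge> 1 - \<delta>"
proof -
  define \<Delta> where "\<Delta> = rr b - rr a"
  have \<Delta>0: "0 \<le> \<Delta>" unfolding \<Delta>_def using assms rr_mono by auto
  define msz where "msz = (\<lambda>N (\<epsilon>::real) (\<delta>::real). nat \<lceil>2 * \<Delta>\<^sup>2 * (real N)\<^sup>2 * ln (2 / \<delta>) / \<epsilon>\<^sup>2\<rceil>)"
  define Alg where "Alg = (\<lambda>N P \<epsilon> \<delta>. if P = {} \<or> \<Delta> * real N < \<epsilon> then return_pmf (Ret a)
      else if 1/2 \<le> \<delta> then pmf_of_set {Ret a, Ret b}
      else map_pmf (\<lambda>x. mk a b x (msz N \<epsilon> \<delta>) 0) (Pi_pmf {..<msz N \<epsilon> \<delta>} (0, {}) (\<lambda>_. qd (W N) N P)))"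
  show ?thesis
  proof (intro exI[of _ Alg] exI[of _ "32 * \<Delta>\<^sup>2"] exI[of _ 2] allI impI)
    fix N :: nat and P :: "nat set" and \<epsilon> \<delta> :: real and test :: "('x \<times> bool) list" and A :: "nat set \<Rightarrow> 'x \<Rightarrow> bool"
    assume PN: "P \<subseteq> {..<N}" and \<epsilon>: "0 < \<epsilon>" and \<delta>0: "0 < \<delta>" and \<delta>1: "\<delta> < 1"
    define orc where "orc = nb_oracle a b N test A"
    define \<beta> where "\<beta> = F_agg (semivalue (W N) {..<N} (\<lambda>S. fpr test (A S))) P"
    define opt where "opt = (if \<beta> \<ge> 0 then a else b)"
    define G where "G = (\<lambda>p. F_agg (semivalue (W N) {..<N} (net_benefit test A p)) P)"
    define SV where "SV = (SUP U\<in>U_cost test A a b. F_agg (semivalue (W N) {..<N} U) P)"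
    have SVeq: "SV = G opt" unfolding SV_def G_def opt_def \<beta>_def using assms by (intro sup_eq) auto
    have err: "\<bar>G c - SV\<bar> \<le> \<Delta> * \<bar>\<beta>\<bar>" if "c \<in> {a, b}" for c
      unfolding SVeq G_def opt_def \<beta>_def \<Delta>_def using assms that by (intro err_bound) auto
    have finP: "finite P" using PN finite_subset by auto
    have \<beta>b: "\<bar>\<beta>\<bar> \<le> real (card P)" unfolding \<beta>_def using assms PN by (intro beta_bound) auto
    have cPN: "card P \<le> N" using PN card_mono[of "{..<N}" P] by auto
    have L: "ln (1 / \<delta>) > 0" using \<delta>0 \<delta>1 by simp
    have rhs0: "0 \<le> 32 * \<Delta>\<^sup>2 * real N ^ 2 * ln (1 / \<delta>) / \<epsilon>\<^sup>2" using L by simp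
    define Good where "Good = {t. \<bar>G (fst (run orc t)) - SV\<bar> < \<epsilon>}"
    have main: "(\<forall>t\<in>set_pmf (Alg N P \<epsilon> \<delta>). fst (run orc t) \<in> {a..b} \<and>
          real (snd (run orc t)) \<le> 32 * \<Delta>\<^sup>2 * real N ^ 2 * ln (1 / \<delta>) / \<epsilon>\<^sup>2)
       \<and> measure_pmf.prob (Alg N P \<epsilon> \<delta>) Good \<ge> 1 - \<delta>"
    proof (cases "P = {} \<or> \<Delta> * real N < \<epsilon>")
      case True
      have AlgE: "Alg N P \<epsilon> \<delta> = return_pmf (Ret a)" using True unfolding Alg_def by simp
      have "\<Delta> * \<bar>\<beta>\<bar> < \<epsilon>"
      proof (cases "P = {}")
        case True
        then show ?thesis using \<epsilon> by (simp add: \<beta>_def F_agg_def)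
      next
        case False
        hence "\<Delta> * real N < \<epsilon>" using \<open>P = {} \<or> \<Delta> * real N < \<epsilon>\<close> by simp
        moreover have "\<Delta> * \<bar>\<beta>\<bar> \<le> \<Delta> * real N"
          using \<beta>b cPN \<Delta>0 by (intro mult_left_mono) auto
        ultimately show ?thesis by linarith
      qed
      hence "Ret a \<in> Good" using err[of a] unfolding Good_def by simp
      thus ?thesis using rhs0 assms \<delta>0 by (simp add: AlgE)
    next
      case False
      hence Pne: "P \<noteq> {}" and big: "\<epsilon> \<le> \<Delta> * real N" by auto
      have \<Delta>pos: "\<Delta> > 0" using big \<epsilon> \<Delta>0 by (cases "\<Delta> = 0") auto
      have ab: "a \<noteq> b" using \<Delta>pos unfolding \<Delta>_def by auto
      have opt_good: "\<bar>G opt - SV\<bar> < \<epsilon>" using SVeq \<epsilon> by simp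
      show ?thesis
      proof (cases "1/2 \<le> \<delta>")
        case True
        have AlgE: "Alg N P \<epsilon> \<delta> = pmf_of_set {Ret a, Ret b}" using True False unfolding Alg_def by auto
        have "Ret opt \<in> Good" using opt_good unfolding Good_def by simp
        hence "{Ret a, Ret b} \<inter> Good \<noteq> {}" unfolding opt_def by (auto split: if_splits)
        hence c1: "1 \<le> card ({Ret a, Ret b} \<inter> Good)" by (simp add: Suc_le_eq card_gt_0_iff)
        have c2: "card {Ret a, Ret b :: (real \<times> nat set, real, real) qtree} = 2" using ab by simp
        have "1 - \<delta> \<le> 1 / 2" using True by simp
        also have "\<dots> \<le> real (card ({Ret a, Ret b} \<inter> Good)) / real (card {Ret a, Ret b :: (real \<times> nat set, real, real) qtree})"
          using c1 c2 by simp
        finally have pr: "1 - \<delta> \<le> measure_pmf.prob (Alg N P \<epsilon> \<delta>) Good"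
          unfolding AlgE by (subst measure_pmf_of_set) auto
        show ?thesis using pr rhs0 assms by (auto simp: AlgE)
      next
        case False
        hence \<delta>h: "\<delta> < 1/2" by simp
        define m where "m = msz N \<epsilon> \<delta>"
        define X where "X = 2 * \<Delta>\<^sup>2 * (real N)\<^sup>2 * ln (2 / \<delta>) / \<epsilon>\<^sup>2"
        have mX: "m = nat \<lceil>X\<rceil>" unfolding m_def msz_def X_def by simp
        have ln2d: "2/3 \<le> ln (2 / \<delta>)"
        proof -
          have "ln 2 \<le> ln (2 / \<delta>)" using \<delta>0 \<delta>1 by (subst ln_le_cancel_iff) (auto simp: field_simps)
          thus ?thesis using ln2_ge_two_thirds by linarith
        qed
        have sq: "\<epsilon>\<^sup>2 \<le> (\<Delta> * real N)\<^sup>2" using big \<epsilon> by (intro power_mono) auto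
        have X1: "1 \<le> X"
        proof -
          have "1 \<le> (\<Delta> * real N)\<^sup>2 / \<epsilon>\<^sup>2" using sq \<epsilon> by simp
          moreover have "X = 2 * ((\<Delta> * real N)\<^sup>2 / \<epsilon>\<^sup>2) * ln (2 / \<delta>)"
            unfolding X_def by (simp add: power_mult_distrib)
          moreover have "1 * (2/3) \<le> ((\<Delta> * real N)\<^sup>2 / \<epsilon>\<^sup>2) * ln (2 / \<delta>)"
            using calculation(1) ln2d by (intro mult_mono) auto
          ultimately show ?thesis by linarith
        qed
        have mge: "X \<le> real m" unfolding mX by linarith
        have mle: "real m \<le> X + 1" unfolding mX using X1 by linarith
        have mpos: "m > 0" using mge X1 by simp
        have ln2: "ln (2 / \<delta>) \<le> 2 * ln (1 / \<delta>)"
        proof -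
          have "ln (2 / \<delta>) = ln 2 + ln (1 / \<delta>)" using \<delta>0 by (simp add: ln_div)
          moreover have "ln 2 \<le> ln (1 / \<delta>)" using \<delta>0 \<delta>h by (subst ln_le_cancel_iff) (auto simp: field_simps)
          ultimately show ?thesis by simp
        qed
        define M where "M = Pi_pmf {..<m} (0, {}) (\<lambda>_. qd (W N) N P)"
        have AlgE: "Alg N P \<epsilon> \<delta> = map_pmf (\<lambda>x. mk a b x m 0) M"
          using \<open>\<not> (P = {} \<or> \<Delta> * real N < \<epsilon>)\<close> False unfolding Alg_def M_def m_def by auto
        have supp: "\<forall>j<m. fst (x j) < N \<and> snd (x j) \<subseteq> {..<N}" if "x \<in> set_pmf M" for x
        proof (intro allI impI)
          fix j assume "j < m"
          hence "x j \<in> set_pmf (qd (W N) N P)" using that unfolding M_def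
            by (subst (asm) set_Pi_pmf) (auto simp: PiE_dflt_def)
          thus "fst (x j) < N \<and> snd (x j) \<subseteq> {..<N}" using set_qd[OF assms(4) PN Pne] by blast
        qed
        define s where "s = (\<lambda>x. \<Sum>j<m. fpd test A (x j))"
        have runE: "run orc (mk a b x m 0) = (if 0 \<le> s x then a else b, 4 * m)" if "x \<in> set_pmf M" for x
        proof -
          have "run orc (mk a b x m 0) = (if 0 \<le> 0 + \<Delta> * s x then a else b, 4 * m)"
            unfolding orc_def s_def \<Delta>_def by (rule run_mk) (use assms supp[OF that] in auto)
          thus ?thesis using \<Delta>pos by (simp add: zero_le_mult_iff)
        qed
        have part1: "\<forall>t\<in>set_pmf (Alg N P \<epsilon> \<delta>). fst (run orc t) \<in> {a..b} \<and>
          real (snd (run orc t)) \<le> 32 * \<Delta>\<^sup>2 * real N ^ 2 * ln (1 / \<delta>) / \<epsilon>\<^sup>2"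
        proof
          fix t assume "t \<in> set_pmf (Alg N P \<epsilon> \<delta>)"
          then obtain x where x: "x \<in> set_pmf M" "t = mk a b x m 0" unfolding AlgE by auto
          have "real (4 * m) \<le> 8 * X" using mle X1 by simp
          also have "\<dots> = 16 * \<Delta>\<^sup>2 * real N ^ 2 * ln (2 / \<delta>) / \<epsilon>\<^sup>2" unfolding X_def by simp
          also have "\<dots> \<le> 16 * \<Delta>\<^sup>2 * real N ^ 2 * (2 * ln (1 / \<delta>)) / \<epsilon>\<^sup>2"
            using ln2 by (intro divide_right_mono mult_left_mono) auto
          finally show "fst (run orc t) \<in> {a..b} \<and>
            real (snd (run orc t)) \<le> 32 * \<Delta>\<^sup>2 * real N ^ 2 * ln (1 / \<delta>) / \<epsilon>\<^sup>2"
            using x runE[OF x(1)] assms by auto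
        qed
        define \<mu> where "\<mu> = measure_pmf.expectation (qd (W N) N P) (fpd test A)"
        have \<mu>eq: "\<mu> = \<beta> / real (card P)" unfolding \<mu>_def \<beta>_def by (rule exp_qd[OF assms(4) PN Pne])
        have Npos: "real N > 0" using big \<epsilon> \<Delta>pos by (cases "N = 0") auto
        define \<eta> where "\<eta> = \<epsilon> / (\<Delta> * real N)"
        define H where "H = {x. \<bar>s x - real m * \<mu>\<bar> \<ge> real m * \<eta>}"
        have hH: "measure_pmf.prob M H \<le> 2 * exp (-2 * (real m * \<eta>)\<^sup>2 / (real m * 4))"
          unfolding H_def s_def M_def \<mu>_def
          by (rule hoeff) (use mpos \<epsilon> \<Delta>pos fpd_bound in \<open>auto simp: \<eta>_def\<close>)
        have "-2 * (real m * \<eta>)\<^sup>2 / (real m * 4) = - (real m * \<eta>\<^sup>2 / 2)"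
          using mpos by (simp add: power2_eq_square field_simps)
        also have "\<dots> \<le> - (X * \<eta>\<^sup>2 / 2)" using mge by (simp add: mult_right_mono)
        also have "X * \<eta>\<^sup>2 / 2 = ln (2 / \<delta>)"
          unfolding X_def \<eta>_def using \<epsilon> \<Delta>pos big Npos by (simp add: power2_eq_square field_simps)
        finally have "2 * exp (-2 * (real m * \<eta>)\<^sup>2 / (real m * 4)) \<le> 2 * exp (- ln (2 / \<delta>))" by simp
        also have "\<dots> = \<delta>" using \<delta>0 by (simp add: exp_minus)
        finally have hH': "measure_pmf.prob M H \<le> \<delta>" using hH by linarith
        have sub: "mk a b x m 0 \<in> Good" if "x \<in> set_pmf M" "x \<notin> H" for x
        proof (rule ccontr)
          assume nG: "mk a b x m 0 \<notin> Good"
          define out where "out = (if 0 \<le> s x then a else b)"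
          have nG': "\<not> \<bar>G out - SV\<bar> < \<epsilon>" using nG runE[OF that(1)] unfolding Good_def out_def by simp
          hence neq: "out \<noteq> opt" using opt_good by auto
          have "out \<in> {a, b}" unfolding out_def by simp
          hence "\<epsilon> \<le> \<Delta> * \<bar>\<beta>\<bar>" using nG' err[of out] by linarith
          moreover have "\<bar>\<beta>\<bar> \<le> \<bar>\<mu>\<bar> * real N"
          proof -
            have "\<bar>\<beta>\<bar> = \<bar>\<mu>\<bar> * real (card P)" using Pne finP unfolding \<mu>eq by (simp add: abs_div)
            also have "\<dots> \<le> \<bar>\<mu>\<bar> * real N" using cPN by (intro mult_left_mono) auto
            finally show ?thesis .
          qed
          ultimately have "\<epsilon> \<le> \<Delta> * (\<bar>\<mu>\<bar> * real N)" using \<Delta>pos by (smt (verit) mult_left_mono)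
          hence "\<eta> \<le> \<bar>\<mu>\<bar>" unfolding \<eta>_def using \<Delta>pos big \<epsilon>
            by (simp add: divide_le_eq mult_ac)
          hence m\<eta>: "real m * \<eta> \<le> real m * \<bar>\<mu>\<bar>" by (intro mult_left_mono) auto
          have sgn: "(\<beta> \<ge> 0 \<and> s x < 0) \<or> (\<beta> < 0 \<and> s x \<ge> 0)"
            using neq ab unfolding out_def opt_def by (auto split: if_splits)
          have "\<beta> \<ge> 0 \<longleftrightarrow> \<mu> \<ge> 0" unfolding \<mu>eq using Pne finP by (simp add: zero_le_divide_iff)
          hence "\<bar>s x - real m * \<mu>\<bar> \<ge> real m * \<bar>\<mu>\<bar>"
          proof (cases "\<mu> \<ge> 0")
            case True
            hence "s x < 0" "real m * \<bar>\<mu>\<bar> = real m * \<mu>" using sgn \<open>\<beta> \<ge> 0 \<longleftrightarrow> \<mu> \<ge> 0\<close> by auto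
            thus ?thesis by linarith
          next
            case False
            hence "s x \<ge> 0" "real m * \<bar>\<mu>\<bar> = - (real m * \<mu>)" using sgn \<open>\<beta> \<ge> 0 \<longleftrightarrow> \<mu> \<ge> 0\<close> by auto
            thus ?thesis by linarith
          qed
          hence "x \<in> H" unfolding H_def using m\<eta> by simp
          thus False using that by simp
        qed
        have "1 - \<delta> \<le> 1 - measure_pmf.prob M H" using hH' by simp
        also have "\<dots> = measure_pmf.prob M (UNIV - H)"
          using measure_pmf.prob_compl[of H M] by simp
        also have "\<dots> = measure_pmf.prob M ((UNIV - H) \<inter> set_pmf M)"
          by (simp add: measure_Int_set_pmf)
        also have "\<dots> \<le> measure_pmf.prob M ((\<lambda>x. mk a b x m 0) -` Good)"
          using sub by (intro measure_pmf.finite_measure_mono) auto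
        also have "\<dots> = measure_pmf.prob (Alg N P \<epsilon> \<delta>) Good" unfolding AlgE by simp
        finally show ?thesis using part1 by simp
      qed
    qed
    thus "(\<forall>t\<in>set_pmf (Alg N P \<epsilon> \<delta>).
          fst (run (nb_oracle a b N test A) t) \<in> {a..b} \<and>
          real (snd (run (nb_oracle a b N test A) t)) \<le> 32 * \<Delta>\<^sup>2 * real N ^ 2 * ln (1 / \<delta>) / \<epsilon>\<^sup>2)
       \<and> measure_pmf.prob (Alg N P \<epsilon> \<delta>)
           {t. \<bar>F_agg (semivalue (W N) {..<N}
                   (net_benefit test A (fst (run (nb_oracle a b N test A) t)))) P
                - (SUP U\<in>U_cost test A a b. F_agg (semivalue (W N) {..<N} U) P)\<bar> < \<epsilon>}
         \<ge> 1 - \<delta>"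
      unfolding Good_def G_def SV_def orc_def .
  qed
qed

end
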